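(* Under the curve flow $\gamma_t=\gamma''-\tfrac23k_1\gamma$, the curvatures evolve by \[ \begin{pmatrix}k_1\\ k_2\end{pmatrix}_t=\begin{pmatrix}k_1''+2k_2'\\ \tfrac23(k_1k_1'-k_1''')-k_2''\end{pmatrix}=\mathcal{P}\,\mathsf E k_2=\mathcal{Q}\,\mathsf E\rho_3, \qquad \rho_3=\tfrac13(k_1')^2+k_2k_1'+k_2^2+\tfrac19k_1^3, \] so this system is bi-Hamiltonian and the integrals $\int k_2\,\mathrm{d}x$ and $\int\rho_3\,\mathrm{d}x$ are conserved (for appropriate boundary conditions).
   Context: $\gamma(x,t)$ is a family of nondegenerate curves in centroaffine $\mathbb R^3$ parametrized by centroaffine arclength $x$ ($\det(\gamma,\gamma',\gamma'')=1$), with $\gamma'''=(k_1\gamma)'+k_2\gamma$ defining the invariants $k_1,k_2$. $D=\partial/\partial x$. The Hamiltonian operators are \[ \mathcal{P}=\begin{pmatrix}-2D^3+Dk_1+k_1D & -D^4+D^2k_1+2Dk_2+k_2D\\ D^4-k_1D^2+2k_2D+Dk_2 & \tfrac23(D^5+k_1Dk_1-k_1D^3-D^3k_1)+[k_2,D^2]\end{pmatrix},\qquad \mathcal{Q}=\begin{pmatrix}0&D\\ D&0\end{pmatrix}, \] and $\mathsf E$ is the vector Euler operator $\mathsf E f=\big(\sum_{j\ge0}(-D)^j\partial f/\partial k_1^{(j)},\ \sum_{j\ge0}(-D)^j\partial f/\partial k_2^{(j)}\big)^{\mathrm T}$. *)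

theory Defs
  imports "HOL-Analysis.Analysis"
begin

definition Dv :: "(real \<Rightarrow> 'a::real_normed_vector) \<Rightarrow> real \<Rightarrow> 'a" where
  "Dv f = (\<lambda>x. vector_derivative f (at x))"

definition Dn :: "nat \<Rightarrow> (real \<Rightarrow> 'a::real_normed_vector) \<Rightarrow> real \<Rightarrow> 'a" where
  "Dn n f = (Dv ^^ n) f"

text \<open>Partial derivatives of a family f x t (x = arclength parameter, t = time).\<close>
definition px :: "(real \<Rightarrow> real \<Rightarrow> 'a::real_normed_vector) \<Rightarrow> real \<Rightarrow> real \<Rightarrow> 'a" where
  "px f = (\<lambda>x t. vector_derivative (\<lambda>y. f y t) (at x))"

definition pt :: "(real \<Rightarrow> real \<Rightarrow> 'a::real_normed_vector) \<Rightarrow> real \<Rightarrow> real \<Rightarrow> 'a" where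
  "pt f = (\<lambda>x t. vector_derivative (\<lambda>s. f x s) (at t))"

fun mixed :: "bool list \<Rightarrow> (real \<Rightarrow> real \<Rightarrow> 'a::real_normed_vector) \<Rightarrow> real \<Rightarrow> real \<Rightarrow> 'a" where
  "mixed [] f = f"
| "mixed (b # bs) f = (if b then px else pt) (mixed bs f)"

definition smooth2 :: "(real \<Rightarrow> real \<Rightarrow> 'a::real_normed_vector) \<Rightarrow> bool" where
  "smooth2 f \<longleftrightarrow> (\<forall>bs. continuous_on UNIV (\<lambda>(x,t). mixed bs f x t)
      \<and> (\<forall>x t. (\<lambda>y. mixed bs f y t) differentiable (at x)
              \<and> (\<lambda>s. mixed bs f x s) differentiable (at t)))"

text \<open>A differential function of (k1,k2) is a function of the jet variables:
  u j stands for k1^(j), v j for k2^(j).\<close>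
type_synonym jet = "nat \<Rightarrow> real"

definition jet :: "(real \<Rightarrow> real) \<Rightarrow> real \<Rightarrow> jet" where
  "jet f x = (\<lambda>j. Dn j f x)"

definition pk1 :: "(jet \<Rightarrow> jet \<Rightarrow> real) \<Rightarrow> nat \<Rightarrow> jet \<Rightarrow> jet \<Rightarrow> real" where
  "pk1 F j u v = deriv (\<lambda>s. F (u(j := s)) v) (u j)"

definition pk2 :: "(jet \<Rightarrow> jet \<Rightarrow> real) \<Rightarrow> nat \<Rightarrow> jet \<Rightarrow> jet \<Rightarrow> real" where
  "pk2 F j u v = deriv (\<lambda>s. F u (v(j := s))) (v j)"

text \<open>Components of the Euler operator E F = (sum_j (-D)^j dF/dk1^(j), sum_j (-D)^j dF/dk2^(j)),
  evaluated along the functions k1 = a, k2 = b.\<close>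
definition E1 :: "(jet \<Rightarrow> jet \<Rightarrow> real) \<Rightarrow> (real \<Rightarrow> real) \<Rightarrow> (real \<Rightarrow> real) \<Rightarrow> real \<Rightarrow> real" where
  "E1 F a b x = (\<Sum>j. (-1) ^ j * Dn j (\<lambda>y. pk1 F j (jet a y) (jet b y)) x)"

definition E2 :: "(jet \<Rightarrow> jet \<Rightarrow> real) \<Rightarrow> (real \<Rightarrow> real) \<Rightarrow> (real \<Rightarrow> real) \<Rightarrow> real \<Rightarrow> real" where
  "E2 F a b x = (\<Sum>j. (-1) ^ j * Dn j (\<lambda>y. pk2 F j (jet a y) (jet b y)) x)"

definition dens_k2 :: "jet \<Rightarrow> jet \<Rightarrow> real" where
  "dens_k2 u v = v 0"

definition rho3 :: "jet \<Rightarrow> jet \<Rightarrow> real" where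
  "rho3 u v = (1/3) * (u 1)^2 + v 0 * u 1 + (v 0)^2 + (1/9) * (u 0)^3"

definition P1 :: "(real \<Rightarrow> real) \<Rightarrow> (real \<Rightarrow> real) \<Rightarrow> (real \<Rightarrow> real) \<Rightarrow> (real \<Rightarrow> real) \<Rightarrow> real \<Rightarrow> real" where
  "P1 k1 k2 f g x =
     - 2 * Dn 3 f x + Dv (\<lambda>y. k1 y * f y) x + k1 x * Dv f x
     + (- Dn 4 g x + Dn 2 (\<lambda>y. k1 y * g y) x + 2 * Dv (\<lambda>y. k2 y * g y) x + k2 x * Dv g x)"

definition P2 :: "(real \<Rightarrow> real) \<Rightarrow> (real \<Rightarrow> real) \<Rightarrow> (real \<Rightarrow> real) \<Rightarrow> (real \<Rightarrow> real) \<Rightarrow> real \<Rightarrow> real" where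
  "P2 k1 k2 f g x =
     Dn 4 f x - k1 x * Dn 2 f x + 2 * k2 x * Dv f x + Dv (\<lambda>y. k2 y * f y) x
     + ((2/3) * (Dn 5 g x + k1 x * Dv (\<lambda>y. k1 y * g y) x - k1 x * Dn 3 g x
                 - Dn 3 (\<lambda>y. k1 y * g y) x)
        + (k2 x * Dn 2 g x - Dn 2 (\<lambda>y. k2 y * g y) x))"

definition Q1 :: "(real \<Rightarrow> real) \<Rightarrow> (real \<Rightarrow> real) \<Rightarrow> real \<Rightarrow> real" where
  "Q1 f g x = Dv g x"

definition Q2 :: "(real \<Rightarrow> real) \<Rightarrow> (real \<Rightarrow> real) \<Rightarrow> real \<Rightarrow> real" where
  "Q2 f g x = Dv f x"

end

theory Submission
  imports Defs
begin


lemma mixed_px: "mixed bs (px f) = mixed (bs @ [True]) f"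
  by (induction bs) auto
lemma mixed_pt: "mixed bs (pt f) = mixed (bs @ [False]) f"
  by (induction bs) auto

lemma smooth2_px: "smooth2 f \<Longrightarrow> smooth2 (px f)"
  unfolding smooth2_def mixed_px by blast
lemma smooth2_pt: "smooth2 f \<Longrightarrow> smooth2 (pt f)"
  unfolding smooth2_def mixed_pt by blast

lemma smooth2_cont: "smooth2 f \<Longrightarrow> continuous_on UNIV (\<lambda>(x,t). f x t)"
  unfolding smooth2_def by (metis mixed.simps(1))

lemma smooth2_dx: "smooth2 f \<Longrightarrow> ((\<lambda>y. f y t) has_vector_derivative px f x t) (at x)"
  unfolding smooth2_def px_def by (metis mixed.simps(1) vector_derivative_works)

lemma smooth2_dt: "smooth2 f \<Longrightarrow> ((\<lambda>s. f x s) has_vector_derivative pt f x t) (at t)"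
  unfolding smooth2_def pt_def by (metis mixed.simps(1) vector_derivative_works)

lemma smooth2_dxr: "smooth2 (f::real\<Rightarrow>real\<Rightarrow>real) \<Longrightarrow> ((\<lambda>y. f y t) has_real_derivative px f x t) (at x)"
  using smooth2_dx has_real_derivative_iff_has_vector_derivative by blast
lemma smooth2_dtr: "smooth2 (f::real\<Rightarrow>real\<Rightarrow>real) \<Longrightarrow> ((\<lambda>s. f x s) has_real_derivative pt f x t) (at t)"
  using smooth2_dt has_real_derivative_iff_has_vector_derivative by blast

lemma cont_x: assumes "continuous_on UNIV (\<lambda>(x,t). f x t)" shows "continuous_on S (\<lambda>z. f z s)"
proof -
  have "continuous_on S (\<lambda>z. (\<lambda>(x,t). f x t) (z,s))"
    by (rule continuous_on_compose2[OF assms]) (auto intro!: continuous_intros)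
  then show ?thesis by simp
qed

lemma cont_swap: assumes "continuous_on UNIV (\<lambda>(x,t). f x t)" shows "continuous_on S (\<lambda>(s,z). f z s)"
proof -
  have "continuous_on S (\<lambda>p. (\<lambda>(x,t). f x t) (snd p, fst p))"
    by (rule continuous_on_compose2[OF assms]) (auto intro!: continuous_intros)
  then show ?thesis by (simp add: split_beta)
qed

lemma clairaut:
  fixes f :: "real \<Rightarrow> real \<Rightarrow> 'a::euclidean_space"
  assumes sm: "smooth2 f"
  shows "px (pt f) x0 t0 = pt (px f) x0 t0"
proof -
  define a where "a = x0 - 1"
  have c1: "\<And>s S. continuous_on S (\<lambda>z. px f z s)"
    using cont_x smooth2_cont[OF smooth2_px[OF sm]] by blast
  have ftc: "f y s = f a s + integral {a..y} (\<lambda>z. px f z s)" if "a \<le> y" for y s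
  proof -
    have "((\<lambda>z. px f z s) has_integral (f y s - f a s)) {a..y}"
      by (rule fundamental_theorem_of_calculus[OF that])
         (auto intro: has_vector_derivative_at_within smooth2_dx[OF sm])
    then show ?thesis by (simp add: integral_unique)
  qed
  have dint: "((\<lambda>s. integral {a..y} (\<lambda>z. px f z s)) has_vector_derivative
               integral {a..y} (\<lambda>z. pt (px f) z s)) (at s)" for y s
  proof -
    have "((\<lambda>s. integral (cbox a y) (\<lambda>z. px f z s)) has_vector_derivative
               integral (cbox a y) (\<lambda>z. pt (px f) z s)) (at s within UNIV)"
    proof (rule leibniz_rule_vector_derivative[where f="\<lambda>s z. px f z s" and fx="\<lambda>s z. pt (px f) z s"])
      show "((\<lambda>s. px f z s) has_vector_derivative pt (px f) z s') (at s' within UNIV)" for s' z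
        using smooth2_dt[OF smooth2_px[OF sm]] by blast
      show "(\<lambda>z. px f z s') integrable_on cbox a y" for s'
        by (rule integrable_continuous) (rule c1)
      show "continuous_on (UNIV \<times> cbox a y) (\<lambda>(s, z). pt (px f) z s)"
        by (rule cont_swap[OF smooth2_cont[OF smooth2_pt[OF smooth2_px[OF sm]]]])
    qed auto
    then show ?thesis by (simp add: cbox_interval)
  qed
  have eqpt: "pt f y s = pt f a s + integral {a..y} (\<lambda>z. pt (px f) z s)" if "a \<le> y" for y s
  proof -
    have "(\<lambda>s. f y s) = (\<lambda>s. f a s + integral {a..y} (\<lambda>z. px f z s))"
      using ftc[OF that] by auto
    moreover have "((\<lambda>s. f a s + integral {a..y} (\<lambda>z. px f z s)) has_vector_derivative
        pt f a s + integral {a..y} (\<lambda>z. pt (px f) z s)) (at s)"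
      by (intro has_vector_derivative_add smooth2_dt[OF sm] dint)
    ultimately show ?thesis unfolding pt_def[of f] by (simp add: vector_derivative_at)
  qed
  define h where "h = (\<lambda>z. pt (px f) z t0)"
  have ch: "continuous_on S h" for S
    unfolding h_def using cont_x smooth2_cont[OF smooth2_pt[OF smooth2_px[OF sm]]] by blast
  have "((\<lambda>u. integral {a..u} h) has_vector_derivative h x0) (at x0 within {a..x0+1})"
    by (rule integral_has_vector_derivative[OF ch]) (auto simp: a_def)
  moreover have "at x0 within {a..x0+1} = at x0"
    by (rule at_within_interior) (auto simp: a_def)
  ultimately have "((\<lambda>u. integral {a..u} h) has_vector_derivative h x0) (at x0)" by simp
  then have "((\<lambda>u. pt f a t0 + integral {a..u} h) has_vector_derivative h x0) (at x0)"
    using has_vector_derivative_add[OF has_vector_derivative_const] by fastforce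
  then have "((\<lambda>u. pt f u t0) has_vector_derivative h x0) (at x0)"
  proof (rule has_vector_derivative_transform_within_open[where S="{a<..}"])
    fix y assume "y \<in> {a<..}"
    then have "a \<le> y" by simp
    from eqpt[OF this, of t0] show "pt f a t0 + integral {a..y} h = pt f y t0"
      unfolding h_def by simp
  qed (auto simp: a_def)
  then show ?thesis unfolding px_def[of "pt f"] h_def by (simp add: vector_derivative_at)
qed




lemma Dv_px: "Dv (\<lambda>y. f y t) = (\<lambda>y. px f y t)"
  unfolding Dv_def px_def by simp

lemma Dn_px: "Dn n (\<lambda>y. f y t) = (\<lambda>y. (px ^^ n) f y t)"
proof (induction n arbitrary: f)
  case 0 then show ?case by (simp add: Dn_def)
next
  case (Suc n)
  have "Dn (Suc n) (\<lambda>y. f y t) = Dn n (Dv (\<lambda>y. f y t))"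
    unfolding Dn_def by (simp add: funpow_Suc_right del: funpow.simps)
  also have "\<dots> = Dn n (\<lambda>y. px f y t)" by (simp add: Dv_px)
  also have "\<dots> = (\<lambda>y. (px ^^ n) (px f) y t)" by (rule Suc)
  also have "\<dots> = (\<lambda>y. (px ^^ Suc n) f y t)" by (simp add: funpow_Suc_right del: funpow.simps)
  finally show ?case .
qed

lemma Dn0[simp]: "Dn 0 f = f" by (simp add: Dn_def)
lemma Dn1: "Dn 1 f = Dv f" by (simp add: Dn_def)
lemma Dn1': "Dn (Suc 0) f = Dv f" by (simp add: Dn_def)

lemma Dv_const[simp]: "Dv (\<lambda>_. c) = (\<lambda>_. 0)"
  unfolding Dv_def by (simp add: vector_derivative_const_at)

lemma Dn_zero[simp]: "Dn n (\<lambda>_. 0) = (\<lambda>_. 0)"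
  by (induction n) (auto simp: Dn_def)

lemma Dn_const: "n > 0 \<Longrightarrow> Dn n (\<lambda>_. c) = (\<lambda>_. 0)"
  by (cases n) (auto simp: Dn_def funpow_Suc_right Dn_zero[unfolded Dn_def] simp del: funpow.simps)

lemma smooth2_funpow: "smooth2 f \<Longrightarrow> smooth2 ((px ^^ n) f)"
  by (induction n) (auto intro: smooth2_px)

lemma pt_funpow: "smooth2 (f::real\<Rightarrow>real\<Rightarrow>'a::euclidean_space) \<Longrightarrow> pt ((px ^^ n) f) = (px ^^ n) (pt f)"
proof (induction n)
  case 0 then show ?case by simp
next
  case (Suc n)
  have "pt ((px ^^ Suc n) f) = pt (px ((px ^^ n) f))" by simp
  also have "\<dots> = px (pt ((px ^^ n) f))"
    using clairaut[OF smooth2_funpow[OF Suc.prems]] by (intro ext) simp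
  also have "\<dots> = (px ^^ Suc n) (pt f)" using Suc by simp
  finally show ?case .
qed

lemma deriv_const': "deriv (\<lambda>s. c) x = 0" by simp

lemma pk_dens: "pk1 dens_k2 j u v = 0" "pk2 dens_k2 0 u v = 1" "j > 0 \<Longrightarrow> pk2 dens_k2 j u v = 0"
  unfolding pk1_def pk2_def dens_k2_def by auto

lemma E_dens: "E1 dens_k2 a b = (\<lambda>_. 0)" "E2 dens_k2 a b = (\<lambda>_. 1)"
proof -
  show "E1 dens_k2 a b = (\<lambda>_. 0)" unfolding E1_def pk_dens by simp
  have "E2 dens_k2 a b x = 1" for x
  proof -
    have "E2 dens_k2 a b x = (\<Sum>j\<in>{0}. (-1) ^ j * Dn j (\<lambda>y. pk2 dens_k2 j (jet a y) (jet b y)) x)"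
      unfolding E2_def by (rule suminf_finite) (auto simp: pk_dens)
    then show ?thesis by (simp add: pk_dens)
  qed
  then show "E2 dens_k2 a b = (\<lambda>_. 1)" by auto
qed

lemma pk_rho3:
  "pk1 rho3 0 u v = (1/3) * (u 0)^2"
  "pk1 rho3 1 u v = (2/3) * u 1 + v 0"
  "j \<ge> 2 \<Longrightarrow> pk1 rho3 j u v = 0"
  "pk2 rho3 0 u v = u 1 + 2 * v 0"
  "j \<ge> 1 \<Longrightarrow> pk2 rho3 j u v = 0"
proof -
  have "((\<lambda>s. rho3 (u(0 := s)) v) has_real_derivative (1/3) * (u 0)^2) (at (u 0))"
    unfolding rho3_def by (auto intro!: derivative_eq_intros simp: power2_eq_square)
  then show "pk1 rho3 0 u v = (1/3) * (u 0)^2" unfolding pk1_def by (rule DERIV_imp_deriv)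
  have "((\<lambda>s. rho3 (u(1 := s)) v) has_real_derivative (2/3) * u 1 + v 0) (at (u 1))"
    unfolding rho3_def by (auto intro!: derivative_eq_intros simp: power2_eq_square)
  then show "pk1 rho3 1 u v = (2/3) * u 1 + v 0" unfolding pk1_def by (rule DERIV_imp_deriv)
  show "j \<ge> 2 \<Longrightarrow> pk1 rho3 j u v = 0" unfolding pk1_def rho3_def by simp
  have "((\<lambda>s. rho3 u (v(0 := s))) has_real_derivative u 1 + 2 * v 0) (at (v 0))"
    unfolding rho3_def by (auto intro!: derivative_eq_intros simp: power2_eq_square)
  then show "pk2 rho3 0 u v = u 1 + 2 * v 0" unfolding pk2_def by (rule DERIV_imp_deriv)
  show "j \<ge> 1 \<Longrightarrow> pk2 rho3 j u v = 0" unfolding pk2_def rho3_def by simp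
qed

lemma E_rho3:
  "E1 rho3 a b = (\<lambda>x. (1/3) * (a x)^2 - Dv (\<lambda>y. (2/3) * Dv a y + b y) x)"
  "E2 rho3 a b = (\<lambda>x. Dv a x + 2 * b x)"
proof -
  have "E1 rho3 a b x = (1/3) * (a x)^2 - Dv (\<lambda>y. (2/3) * Dv a y + b y) x" for x
  proof -
    have "E1 rho3 a b x = (\<Sum>j\<in>{0,1}. (-1) ^ j * Dn j (\<lambda>y. pk1 rho3 j (jet a y) (jet b y)) x)"
      unfolding E1_def by (rule suminf_finite) (auto simp: pk_rho3)
    then show ?thesis using pk_rho3(2) by (simp add: pk_rho3 jet_def Dn1 Dn1')
  qed
  then show "E1 rho3 a b = (\<lambda>x. (1/3) * (a x)^2 - Dv (\<lambda>y. (2/3) * Dv a y + b y) x)" by auto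
  have "E2 rho3 a b x = Dv a x + 2 * b x" for x
  proof -
    have "E2 rho3 a b x = (\<Sum>j\<in>{0}. (-1) ^ j * Dn j (\<lambda>y. pk2 rho3 j (jet a y) (jet b y)) x)"
      unfolding E2_def by (rule suminf_finite) (auto simp: pk_rho3)
    then show ?thesis by (simp add: pk_rho3 jet_def Dn1 Dn1')
  qed
  then show "E2 rho3 a b = (\<lambda>x. Dv a x + 2 * b x)" by auto
qed

lemma indep3:
  fixes A B C :: "real^3"
  assumes d: "det (vector [A, B, C] :: real^3^3) = 1"
    and e: "\<And>i. a * A$i + b * B$i + c * C$i = 0"
  shows "a = 0 \<and> b = 0 \<and> c = 0"
proof -
  have e1: "a * A$1 + b * B$1 + c * C$1 = 0" and e2: "a * A$2 + b * B$2 + c * C$2 = 0"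
    and e3: "a * A$3 + b * B$3 + c * C$3 = 0" using e by auto
  have D: "A$1 * B$2 * C$3 + A$2 * B$3 * C$1 + A$3 * B$1 * C$2 - A$1 * B$3 * C$2
     - A$2 * B$1 * C$3 - A$3 * B$2 * C$1 = 1"
    using d by (simp add: det_3)
  have "a = a * (A$1 * B$2 * C$3 + A$2 * B$3 * C$1 + A$3 * B$1 * C$2 - A$1 * B$3 * C$2
     - A$2 * B$1 * C$3 - A$3 * B$2 * C$1)" using D by simp
  also have "\<dots> = (a * A$1 + b * B$1 + c * C$1) * (B$2 * C$3 - B$3 * C$2)
     + (a * A$2 + b * B$2 + c * C$2) * (B$3 * C$1 - B$1 * C$3)
     + (a * A$3 + b * B$3 + c * C$3) * (B$1 * C$2 - B$2 * C$1)"
    by (simp add: algebra_simps)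
  finally have "a = 0" using e1 e2 e3 by simp
  have "b = b * (A$1 * B$2 * C$3 + A$2 * B$3 * C$1 + A$3 * B$1 * C$2 - A$1 * B$3 * C$2
     - A$2 * B$1 * C$3 - A$3 * B$2 * C$1)" using D by simp
  also have "\<dots> = (a * A$1 + b * B$1 + c * C$1) * (A$3 * C$2 - A$2 * C$3)
     + (a * A$2 + b * B$2 + c * C$2) * (A$1 * C$3 - A$3 * C$1)
     + (a * A$3 + b * B$3 + c * C$3) * (A$2 * C$1 - A$1 * C$2)"
    using \<open>a = 0\<close> by (simp add: algebra_simps)
  finally have "b = 0" using e1 e2 e3 by simp
  have "c = c * (A$1 * B$2 * C$3 + A$2 * B$3 * C$1 + A$3 * B$1 * C$2 - A$1 * B$3 * C$2
     - A$2 * B$1 * C$3 - A$3 * B$2 * C$1)" using D by simp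
  also have "\<dots> = (a * A$1 + b * B$1 + c * C$1) * (A$2 * B$3 - A$3 * B$2)
     + (a * A$2 + b * B$2 + c * C$2) * (A$3 * B$1 - A$1 * B$3)
     + (a * A$3 + b * B$3 + c * C$3) * (A$1 * B$2 - A$2 * B$1)"
    using \<open>a = 0\<close> \<open>b = 0\<close> by (simp add: algebra_simps)
  finally have "c = 0" using e1 e2 e3 by simp
  show ?thesis using \<open>a = 0\<close> \<open>b = 0\<close> \<open>c = 0\<close> by simp
qed

lemma per_deriv:
  fixes g :: "real \<Rightarrow> real"
  assumes p: "\<And>x. g (x + L) = g x" and d: "\<And>x. g differentiable (at x)"
  shows "Dv g (x + L) = Dv g x"
proof -
  have "(g has_real_derivative Dv g (x + L)) (at (x + L))"
    unfolding Dv_def using d vector_derivative_works has_real_derivative_iff_has_vector_derivative by blast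
  then have "((\<lambda>y. g (y + L)) has_real_derivative Dv g (x + L)) (at x)" by (simp add: DERIV_shift)
  then have "(g has_real_derivative Dv g (x + L)) (at x)" using p by simp
  then show ?thesis unfolding Dv_def
    by (simp add: has_real_derivative_iff_has_vector_derivative vector_derivative_at)
qed

lemma per_funpow:
  assumes sm: "smooth2 (f::real\<Rightarrow>real\<Rightarrow>real)" and p: "\<And>x t. f (x + L) t = f x t"
  shows "(px ^^ n) f (x + L) t = (px ^^ n) f x t"
proof (induction n arbitrary: x)
  case 0 then show ?case using p by simp
next
  case (Suc n)
  have d: "(\<lambda>y. (px ^^ n) f y t) differentiable (at x)" for x
    using smooth2_dx[OF smooth2_funpow[OF sm]] by (auto simp: differentiable_def has_vector_derivative_def)
  have "(px ^^ Suc n) f (x + L) t = Dv (\<lambda>y. (px ^^ n) f y t) (x + L)" by (simp add: Dv_px)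
  also have "\<dots> = Dv (\<lambda>y. (px ^^ n) f y t) x" by (rule per_deriv[OF Suc d])
  also have "\<dots> = (px ^^ Suc n) f x t" by (simp add: Dv_px)
  finally show ?case .
qed




lemma funpow2: "(f ^^ 2) x = f (f x)" by (simp add: numeral_2_eq_2)
lemma funpow3: "(f ^^ 3) x = f (f (f x))" by (simp add: numeral_3_eq_3)

locale FL =
  fixes \<gamma> :: "real \<Rightarrow> real \<Rightarrow> real^3" and k1 k2 :: "real \<Rightarrow> real \<Rightarrow> real"
  assumes sg: "smooth2 \<gamma>" and s1: "smooth2 k1" and s2: "smooth2 k2"
    and arclength: "\<And>x t. det (vector [\<gamma> x t, Dn 1 (\<lambda>y. \<gamma> y t) x, Dn 2 (\<lambda>y. \<gamma> y t) x]
                            :: real^3^3) = 1"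
    and structure_eq: "\<And>x t. Dn 3 (\<lambda>y. \<gamma> y t) x
           = Dv (\<lambda>y. k1 y t *\<^sub>R \<gamma> y t) x + k2 x t *\<^sub>R \<gamma> x t"
    and flow: "\<And>x t. pt \<gamma> x t = Dn 2 (\<lambda>y. \<gamma> y t) x - ((2/3) * k1 x t) *\<^sub>R \<gamma> x t"
begin

lemma smv: "smooth2 \<gamma>" "smooth2 (px \<gamma>)" "smooth2 (px (px \<gamma>))" "smooth2 (px (px (px \<gamma>)))"
  using sg by (auto intro!: smooth2_px)
lemma smk: "smooth2 k1" "smooth2 (px k1)" "smooth2 (px (px k1))" "smooth2 (px (px (px k1)))"
   "smooth2 k2" "smooth2 (px k2)" "smooth2 (px (px k2))" "smooth2 (px (px (px k2)))"
  using s1 s2 by (auto intro!: smooth2_px)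

lemma dxv[derivative_intros]:
  "((\<lambda>y. \<gamma> y t) has_vector_derivative px \<gamma> x t) (at x within S)"
  "((\<lambda>y. px \<gamma> y t) has_vector_derivative px (px \<gamma>) x t) (at x within S)"
  "((\<lambda>y. px (px \<gamma>) y t) has_vector_derivative px (px (px \<gamma>)) x t) (at x within S)"
  using smv by (auto intro!: has_vector_derivative_at_within smooth2_dx)

lemma dxk[derivative_intros]:
  "((\<lambda>y. k1 y t) has_field_derivative px k1 x t) (at x within S)"
  "((\<lambda>y. px k1 y t) has_field_derivative px (px k1) x t) (at x within S)"
  "((\<lambda>y. px (px k1) y t) has_field_derivative px (px (px k1)) x t) (at x within S)"
  "((\<lambda>y. k2 y t) has_field_derivative px k2 x t) (at x within S)"
  "((\<lambda>y. px k2 y t) has_field_derivative px (px k2) x t) (at x within S)"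
  "((\<lambda>y. px (px k2) y t) has_field_derivative px (px (px k2)) x t) (at x within S)"
  using smk by (auto intro!: has_field_derivative_at_within smooth2_dxr)

lemma dtv[derivative_intros]:
  "((\<lambda>s. \<gamma> x s) has_vector_derivative pt \<gamma> x t) (at t within S)"
  "((\<lambda>s. px \<gamma> x s) has_vector_derivative pt (px \<gamma>) x t) (at t within S)"
  using smv by (auto intro!: has_vector_derivative_at_within smooth2_dt)

lemma dtk[derivative_intros]:
  "((\<lambda>s. k1 x s) has_field_derivative pt k1 x t) (at t within S)"
  "((\<lambda>s. px k1 x s) has_field_derivative pt (px k1) x t) (at t within S)"
  "((\<lambda>s. k2 x s) has_field_derivative pt k2 x t) (at t within S)"
  using smk by (auto intro!: has_field_derivative_at_within smooth2_dtr)

lemma S: "px (px (px \<gamma>)) x t = (px k1 x t + k2 x t) *\<^sub>R \<gamma> x t + k1 x t *\<^sub>R px \<gamma> x t"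
proof -
  have "((\<lambda>y. k1 y t *\<^sub>R \<gamma> y t) has_vector_derivative k1 x t *\<^sub>R px \<gamma> x t + px k1 x t *\<^sub>R \<gamma> x t) (at x)"
    by (auto intro!: derivative_eq_intros)
  then have "Dv (\<lambda>y. k1 y t *\<^sub>R \<gamma> y t) x = k1 x t *\<^sub>R px \<gamma> x t + px k1 x t *\<^sub>R \<gamma> x t"
    unfolding Dv_def by (rule vector_derivative_at)
  then show ?thesis using structure_eq[of t x]
    by (simp add: Dn_px funpow3 algebra_simps)
qed

lemma S': "px (px (px \<gamma>)) = (\<lambda>x t. (px k1 x t + k2 x t) *\<^sub>R \<gamma> x t + k1 x t *\<^sub>R px \<gamma> x t)"
  using S by (intro ext) simp

lemma F': "pt \<gamma> = (\<lambda>x t. px (px \<gamma>) x t - ((2/3) * k1 x t) *\<^sub>R \<gamma> x t)"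
  using flow by (intro ext) (simp add: Dn_px funpow2)

lemma F: "pt \<gamma> x t = px (px \<gamma>) x t - ((2/3) * k1 x t) *\<^sub>R \<gamma> x t"
  by (simp add: F')

lemma X1: "px (pt \<gamma>) x t = ((1/3) * px k1 x t + k2 x t) *\<^sub>R \<gamma> x t + ((1/3) * k1 x t) *\<^sub>R px \<gamma> x t"
proof -
  have "((\<lambda>y. pt \<gamma> y t) has_vector_derivative
     ((1/3) * px k1 x t + k2 x t) *\<^sub>R \<gamma> x t + ((1/3) * k1 x t) *\<^sub>R px \<gamma> x t) (at x)"
    unfolding F' by (rule derivative_eq_intros refl | simp)+ (simp add: S vec_eq_iff algebra_simps)
  then show ?thesis unfolding px_def[of "pt \<gamma>"] by (rule vector_derivative_at)
qed

lemma X1': "px (pt \<gamma>) = (\<lambda>x t. ((1/3) * px k1 x t + k2 x t) *\<^sub>R \<gamma> x t + ((1/3) * k1 x t) *\<^sub>R px \<gamma> x t)"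
  using X1 by (intro ext) simp

lemma X2: "px (px (pt \<gamma>)) x t = ((1/3) * px (px k1) x t + px k2 x t) *\<^sub>R \<gamma> x t
   + ((2/3) * px k1 x t + k2 x t) *\<^sub>R px \<gamma> x t + ((1/3) * k1 x t) *\<^sub>R px (px \<gamma>) x t"
proof -
  have "((\<lambda>y. px (pt \<gamma>) y t) has_vector_derivative
     ((1/3) * px (px k1) x t + px k2 x t) *\<^sub>R \<gamma> x t
   + ((2/3) * px k1 x t + k2 x t) *\<^sub>R px \<gamma> x t + ((1/3) * k1 x t) *\<^sub>R px (px \<gamma>) x t) (at x)"
    unfolding X1' by (rule derivative_eq_intros refl | simp)+ (simp add: vec_eq_iff algebra_simps)
  then show ?thesis unfolding px_def[of "px (pt \<gamma>)"] by (rule vector_derivative_at)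
qed

lemma X2': "px (px (pt \<gamma>)) = (\<lambda>x t. ((1/3) * px (px k1) x t + px k2 x t) *\<^sub>R \<gamma> x t
   + ((2/3) * px k1 x t + k2 x t) *\<^sub>R px \<gamma> x t + ((1/3) * k1 x t) *\<^sub>R px (px \<gamma>) x t)"
  using X2 by (intro ext) simp

lemma X3: "px (px (px (pt \<gamma>))) x t =
    ((1/3) * px (px (px k1)) x t + px (px k2) x t + (1/3) * k1 x t * (px k1 x t + k2 x t)) *\<^sub>R \<gamma> x t
  + (px (px k1) x t + 2 * px k2 x t + (1/3) * (k1 x t)^2) *\<^sub>R px \<gamma> x t
  + (px k1 x t + k2 x t) *\<^sub>R px (px \<gamma>) x t"
proof -
  have "((\<lambda>y. px (px (pt \<gamma>)) y t) has_vector_derivative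
    ((1/3) * px (px (px k1)) x t + px (px k2) x t + (1/3) * k1 x t * (px k1 x t + k2 x t)) *\<^sub>R \<gamma> x t
  + (px (px k1) x t + 2 * px k2 x t + (1/3) * (k1 x t)^2) *\<^sub>R px \<gamma> x t
  + (px k1 x t + k2 x t) *\<^sub>R px (px \<gamma>) x t) (at x)"
    unfolding X2' by (rule derivative_eq_intros refl | simp)+ (simp add: S vec_eq_iff algebra_simps power2_eq_square)
  then show ?thesis unfolding px_def[of "px (px (pt \<gamma>))"] by (rule vector_derivative_at)
qed

lemma T: "pt (px (px (px \<gamma>))) x t =
    (pt (px k1) x t + pt k2 x t) *\<^sub>R \<gamma> x t + (px k1 x t + k2 x t) *\<^sub>R pt \<gamma> x t
  + pt k1 x t *\<^sub>R px \<gamma> x t + k1 x t *\<^sub>R pt (px \<gamma>) x t"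
proof -
  have "((\<lambda>s. px (px (px \<gamma>)) x s) has_vector_derivative
    (pt (px k1) x t + pt k2 x t) *\<^sub>R \<gamma> x t + (px k1 x t + k2 x t) *\<^sub>R pt \<gamma> x t
  + pt k1 x t *\<^sub>R px \<gamma> x t + k1 x t *\<^sub>R pt (px \<gamma>) x t) (at t)"
    unfolding S' by (rule derivative_eq_intros refl | simp)+
  then show ?thesis unfolding pt_def[of "px (px (px \<gamma>))"] by (rule vector_derivative_at)
qed

lemma coeffs: "pt k1 x t = px (px k1) x t + 2 * px k2 x t \<and>
   pt (px k1) x t + pt k2 x t - (2/3) * k1 x t * (px k1 x t + k2 x t) + k1 x t * ((1/3) * px k1 x t + k2 x t)
    - ((1/3) * px (px (px k1)) x t + px (px k2) x t + (1/3) * k1 x t * (px k1 x t + k2 x t)) = 0"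
proof -
  have c: "pt (px (px (px \<gamma>))) x t = px (px (px (pt \<gamma>))) x t"
    using pt_funpow[OF sg, of 3] by (simp add: funpow3)
  have ptpx: "pt (px \<gamma>) x t = px (pt \<gamma>) x t" using clairaut[OF sg] by simp
  define A where "A = \<gamma> x t"
  define B where "B = px \<gamma> x t"
  define C where "C = px (px \<gamma>) x t"
  define a where "a = pt (px k1) x t + pt k2 x t - (2/3) * k1 x t * (px k1 x t + k2 x t) + k1 x t * ((1/3) * px k1 x t + k2 x t)
    - ((1/3) * px (px (px k1)) x t + px (px k2) x t + (1/3) * k1 x t * (px k1 x t + k2 x t))"
  define b where "b = pt k1 x t - (px (px k1) x t + 2 * px k2 x t)"
  define c where "c = (0::real)"
  have eq: "a * A$i + b * B$i + c * C$i = 0" for i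
  proof -
    have "(pt (px (px (px \<gamma>))) x t) $ i = (px (px (px (pt \<gamma>))) x t) $ i" using c by simp
    then have "(pt (px k1) x t + pt k2 x t) * A$i + (px k1 x t + k2 x t) * (C$i - ((2/3) * k1 x t) * A$i)
         + pt k1 x t * B$i + k1 x t * (((1/3) * px k1 x t + k2 x t) * A$i + ((1/3) * k1 x t) * B$i) =
      ((1/3) * px (px (px k1)) x t + px (px k2) x t + (1/3) * k1 x t * (px k1 x t + k2 x t)) * A$i
     + (px (px k1) x t + 2 * px k2 x t + (1/3) * (k1 x t)^2) * B$i + (px k1 x t + k2 x t) * C$i"
      unfolding T X3 ptpx X1 F A_def B_def C_def by simp
    then show ?thesis
      unfolding a_def b_def c_def A_def B_def C_def
      by (simp add: algebra_simps power2_eq_square)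
  qed
  have d: "det (vector [A, B, C] :: real^3^3) = 1"
    using arclength[of x t] by (simp add: A_def B_def C_def Dn_px funpow2)
  from indep3[OF d eq] show ?thesis unfolding a_def b_def by simp
qed

lemma evol1: "pt k1 x t = px (px k1) x t + 2 * px k2 x t"
  using coeffs by simp

lemma evol2: "pt k2 x t = (2/3) * (k1 x t * px k1 x t - px (px (px k1)) x t) - px (px k2) x t"
proof -
  have e1: "pt k1 = (\<lambda>x t. px (px k1) x t + 2 * px k2 x t)" using evol1 by (intro ext) simp
  have "((\<lambda>y. pt k1 y t) has_field_derivative px (px (px k1)) x t + 2 * px (px k2) x t) (at x)"
    unfolding e1 by (auto intro!: derivative_eq_intros)
  then have "px (pt k1) x t = px (px (px k1)) x t + 2 * px (px k2) x t"
    unfolding px_def[of "pt k1"] by (simp add: has_real_derivative_iff_has_vector_derivative vector_derivative_at)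
  moreover have "pt (px k1) x t = px (pt k1) x t" using clairaut[OF s1] by simp
  ultimately show ?thesis using coeffs[of x t] by (simp add: algebra_simps)
qed

lemma ptpx1: "pt (px k1) x t = px (px (px k1)) x t + 2 * px (px k2) x t"
proof -
  have e1: "pt k1 = (\<lambda>x t. px (px k1) x t + 2 * px k2 x t)" using evol1 by (intro ext) simp
  have "((\<lambda>y. pt k1 y t) has_field_derivative px (px (px k1)) x t + 2 * px (px k2) x t) (at x)"
    unfolding e1 by (auto intro!: derivative_eq_intros)
  then have "px (pt k1) x t = px (px (px k1)) x t + 2 * px (px k2) x t"
    unfolding px_def[of "pt k1"] by (simp add: has_real_derivative_iff_has_vector_derivative vector_derivative_at)
  moreover have "pt (px k1) x t = px (pt k1) x t" using clairaut[OF s1] by simp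
  ultimately show ?thesis by simp
qed

end



lemma Dv_at: "(g has_real_derivative D) (at z) \<Longrightarrow> Dv g z = D"
  unfolding Dv_def by (simp add: has_real_derivative_iff_has_vector_derivative vector_derivative_at)

lemma cont_sw: "continuous_on UNIV (\<lambda>(x,t). f x t) \<Longrightarrow> continuous_on S (\<lambda>p. f (snd p) (fst p))"
  using cont_swap[of f S] by (simp add: split_beta)

context FL begin

lemma pointwise:
  "let a = (\<lambda>y. k1 y t); b = (\<lambda>y. k2 y t);
          r1 = Dn 2 a x + 2 * Dv b x;
          r2 = (2/3) * (a x * Dv a x - Dn 3 a x) - Dn 2 b x
      in pt k1 x t = r1 \<and> pt k2 x t = r2
       \<and> P1 a b (E1 dens_k2 a b) (E2 dens_k2 a b) x = r1
       \<and> P2 a b (E1 dens_k2 a b) (E2 dens_k2 a b) x = r2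
       \<and> Q1 (E1 rho3 a b) (E2 rho3 a b) x = r1
       \<and> Q2 (E1 rho3 a b) (E2 rho3 a b) x = r2"
proof -
  have dc: "Dn n (\<lambda>_. c) = (\<lambda>_. 0)" if "n > 0" for n c using Dn_const that by blast
  have q1: "Dv (\<lambda>y. px k1 y t + 2 * k2 y t) x = px (px k1) x t + 2 * px k2 x t"
    by (rule Dv_at) (auto intro!: derivative_eq_intros)
  have inner: "Dv (\<lambda>y. 2 / 3 * px k1 y t + k2 y t) = (\<lambda>z. 2 / 3 * px (px k1) z t + px k2 z t)"
    by (rule ext, rule Dv_at) (auto intro!: derivative_eq_intros)
  have q2: "Dv (\<lambda>z. 1 / 3 * (k1 z t)\<^sup>2 - (2 / 3 * px (px k1) z t + px k2 z t)) x
      = 2/3 * k1 x t * px k1 x t - (2 / 3 * px (px (px k1)) x t + px (px k2) x t)"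
    by (rule Dv_at) (auto intro!: derivative_eq_intros)
  have c2: "Dn 2 (\<lambda>_. c) = (\<lambda>_. 0)" "Dn 3 (\<lambda>_. c) = (\<lambda>_. 0)" "Dn 4 (\<lambda>_. c) = (\<lambda>_. 0)"
     "Dn 5 (\<lambda>_. c) = (\<lambda>_. 0)" for c::real by (auto intro!: dc)
  show ?thesis
    unfolding Let_def E_dens E_rho3 P1_def P2_def Q1_def Q2_def
    apply (simp only: mult_zero_right mult_1_right Dn_zero c2 Dv_const)
    apply (simp only: Dn_px Dv_px funpow2 funpow3 inner q1 q2)
    apply (simp add: evol1 evol2)
    done
qed

end



context FL begin

lemma cont_sw_all:
  "continuous_on S (\<lambda>p. k1 (snd p) (fst p))" "continuous_on S (\<lambda>p. k2 (snd p) (fst p))"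
  "continuous_on S (\<lambda>p. px k1 (snd p) (fst p))"
  "continuous_on S (\<lambda>p. pt k1 (snd p) (fst p))" "continuous_on S (\<lambda>p. pt k2 (snd p) (fst p))"
  "continuous_on S (\<lambda>p. pt (px k1) (snd p) (fst p))"
  using smk by (auto intro!: cont_sw smooth2_cont smooth2_pt)

lemma cont_x_all: "continuous_on S (\<lambda>z. k1 z s)" "continuous_on S (\<lambda>z. k2 z s)"
  "continuous_on S (\<lambda>z. px k1 z s)"
  using smk by (auto intro!: cont_x smooth2_cont)

lemma cons1:
  assumes per: "\<And>x t. k1 (x + L) t = k1 x t" "\<And>x t. k2 (x + L) t = k2 x t" and L: "L > 0"
  shows "((\<lambda>s. integral {0..L} (\<lambda>x. k2 x s)) has_real_derivative 0) (at t)"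
proof -
  have "((\<lambda>s. integral (cbox 0 L) (\<lambda>x. k2 x s)) has_real_derivative integral (cbox 0 L) (\<lambda>x. pt k2 x t))
    (at t within UNIV)"
  proof (rule leibniz_rule_field_derivative[where f="\<lambda>s x. k2 x s" and fx="\<lambda>s x. pt k2 x s"])
    show "continuous_on (UNIV \<times> cbox 0 L) (\<lambda>(s, x). pt k2 x s)"
      using cont_sw_all(5) by (simp add: split_beta)
    show "(\<lambda>x. k2 x s) integrable_on cbox 0 L" for s
      by (rule integrable_continuous) (rule cont_x_all)
  qed (auto intro!: derivative_eq_intros)
  moreover have "integral {0..L} (\<lambda>x. pt k2 x t) = 0"
  proof -
    define H where "H = (\<lambda>y. 1/3 * (k1 y t)^2 - 2/3 * px (px k1) y t - px k2 y t)"
    have "((\<lambda>x. pt k2 x t) has_integral (H L - H 0)) {0..L}"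
    proof (rule fundamental_theorem_of_calculus)
      fix y
      have "(H has_real_derivative pt k2 y t) (at y within {0..L})"
        unfolding H_def evol2 by (rule derivative_eq_intros refl | simp)+
      then show "(H has_vector_derivative pt k2 y t) (at y within {0..L})"
        by (simp add: has_real_derivative_iff_has_vector_derivative)
    qed (use L in simp)
    moreover have "H L = H 0"
      using per_funpow[OF s1 per(1), of 0 0 t] per_funpow[OF s1 per(1), of 2 0 t]
        per_funpow[OF s2 per(2), of 1 0 t]
      by (simp add: H_def funpow2)
    ultimately show ?thesis by (simp add: integral_unique)
  qed
  ultimately show ?thesis by (simp add: cbox_interval)
qed

lemma cons2:
  assumes per: "\<And>x t. k1 (x + L) t = k1 x t" "\<And>x t. k2 (x + L) t = k2 x t" and L: "L > 0"
  shows "((\<lambda>s. integral {0..L} (\<lambda>x. rho3 (jet (\<lambda>y. k1 y s) x) (jet (\<lambda>y. k2 y s) x)))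
              has_real_derivative 0) (at t)"
proof -
  have R: "rho3 (jet (\<lambda>y. k1 y s) x) (jet (\<lambda>y. k2 y s) x) =
      1/3 * (px k1 x s)^2 + k2 x s * px k1 x s + (k2 x s)^2 + 1/9 * (k1 x s)^3" for x s
    by (simp add: rho3_def jet_def Dn1 Dn1' Dv_px)
  define fx where "fx = (\<lambda>s x. 2/3 * px k1 x s * pt (px k1) x s + pt k2 x s * px k1 x s
      + k2 x s * pt (px k1) x s + 2 * k2 x s * pt k2 x s + 1/3 * (k1 x s)^2 * pt k1 x s)"
  have "((\<lambda>s. integral (cbox 0 L) (\<lambda>x. 1/3 * (px k1 x s)^2 + k2 x s * px k1 x s + (k2 x s)^2 + 1/9 * (k1 x s)^3))
      has_real_derivative integral (cbox 0 L) (fx t)) (at t within UNIV)"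
  proof (rule leibniz_rule_field_derivative[where fx=fx])
    have "continuous_on (UNIV \<times> cbox 0 L) (\<lambda>p. fx (fst p) (snd p))"
      unfolding fx_def by (intro continuous_intros cont_sw_all)
    then show "continuous_on (UNIV \<times> cbox 0 L) (\<lambda>(s, x). fx s x)"
      by (simp add: split_beta)
    show "(\<lambda>x. 1/3 * (px k1 x s)^2 + k2 x s * px k1 x s + (k2 x s)^2 + 1/9 * (k1 x s)^3) integrable_on cbox 0 L" for s
      by (rule integrable_continuous) (intro continuous_intros cont_x_all)
    show "((\<lambda>s. 1/3 * (px k1 x s)^2 + k2 x s * px k1 x s + (k2 x s)^2 + 1/9 * (k1 x s)^3)
        has_real_derivative fx s x) (at s within UNIV)" for s x
      unfolding fx_def by (rule derivative_eq_intros refl | simp)+ (simp add: algebra_simps power2_eq_square)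
  qed auto
  moreover have "integral {0..L} (fx t) = 0"
  proof -
    define H where "H = (\<lambda>y. 1/3 * (px k1 y t * px k2 y t - k2 y t * px (px k1) y t)
        + 1/3 * (k1 y t)^2 * px k1 y t + 2/3 * (k1 y t)^2 * k2 y t)"
    have "(fx t has_integral (H L - H 0)) {0..L}"
    proof (rule fundamental_theorem_of_calculus)
      fix y
      have "(H has_real_derivative fx t y) (at y within {0..L})"
        unfolding H_def fx_def evol1 evol2 ptpx1
        by (rule derivative_eq_intros refl | simp)+ (simp add: field_simps power2_eq_square)
      then show "(H has_vector_derivative fx t y) (at y within {0..L})"
        by (simp add: has_real_derivative_iff_has_vector_derivative)
    qed (use L in simp)
    moreover have "H L = H 0"
      using per_funpow[OF s1 per(1), of 0 0 t] per_funpow[OF s1 per(1), of 1 0 t]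
        per_funpow[OF s1 per(1), of 2 0 t]
        per_funpow[OF s2 per(2), of 1 0 t] per_funpow[OF s2 per(2), of 0 0 t]
      by (simp add: H_def funpow2)
    ultimately show ?thesis by (simp add: integral_unique)
  qed
  ultimately show ?thesis by (simp add: cbox_interval R)
qed

end

theorem mainTheorem2:
  fixes \<gamma> :: "real \<Rightarrow> real \<Rightarrow> real^3" and k1 k2 :: "real \<Rightarrow> real \<Rightarrow> real"
  assumes smooth_gamma: "smooth2 \<gamma>" and smooth_k1: "smooth2 k1" and smooth_k2: "smooth2 k2"
    and arclength: "\<And>x t. det (vector [\<gamma> x t, Dn 1 (\<lambda>y. \<gamma> y t) x, Dn 2 (\<lambda>y. \<gamma> y t) x]
                            :: real^3^3) = 1"
    and structure_eq: "\<And>x t. Dn 3 (\<lambda>y. \<gamma> y t) x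
           = Dv (\<lambda>y. k1 y t *\<^sub>R \<gamma> y t) x + k2 x t *\<^sub>R \<gamma> x t"
    and flow: "\<And>x t. pt \<gamma> x t = Dn 2 (\<lambda>y. \<gamma> y t) x - ((2/3) * k1 x t) *\<^sub>R \<gamma> x t"
  shows "(\<forall>x t.
      let a = (\<lambda>y. k1 y t); b = (\<lambda>y. k2 y t);
          r1 = Dn 2 a x + 2 * Dv b x;
          r2 = (2/3) * (a x * Dv a x - Dn 3 a x) - Dn 2 b x
      in pt k1 x t = r1 \<and> pt k2 x t = r2
       \<and> P1 a b (E1 dens_k2 a b) (E2 dens_k2 a b) x = r1
       \<and> P2 a b (E1 dens_k2 a b) (E2 dens_k2 a b) x = r2
       \<and> Q1 (E1 rho3 a b) (E2 rho3 a b) x = r1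
       \<and> Q2 (E1 rho3 a b) (E2 rho3 a b) x = r2)
    \<and> (\<forall>L > 0. (\<forall>x t. k1 (x + L) t = k1 x t \<and> k2 (x + L) t = k2 x t) \<longrightarrow>
      (\<forall>t. ((\<lambda>s. integral {0..L} (\<lambda>x. k2 x s)) has_real_derivative 0) (at t)
         \<and> ((\<lambda>s. integral {0..L} (\<lambda>x. rho3 (jet (\<lambda>y. k1 y s) x) (jet (\<lambda>y. k2 y s) x)))
              has_real_derivative 0) (at t)))"
proof -
  interpret FL \<gamma> k1 k2
    using smooth_gamma smooth_k1 smooth_k2 arclength structure_eq flow by unfold_locales blast+
  show ?thesis
  proof (intro conjI allI impI)
    fix x t show "let a = (\<lambda>y. k1 y t); b = (\<lambda>y. k2 y t);
          r1 = Dn 2 a x + 2 * Dv b x;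
          r2 = (2/3) * (a x * Dv a x - Dn 3 a x) - Dn 2 b x
      in pt k1 x t = r1 \<and> pt k2 x t = r2
       \<and> P1 a b (E1 dens_k2 a b) (E2 dens_k2 a b) x = r1
       \<and> P2 a b (E1 dens_k2 a b) (E2 dens_k2 a b) x = r2
       \<and> Q1 (E1 rho3 a b) (E2 rho3 a b) x = r1
       \<and> Q2 (E1 rho3 a b) (E2 rho3 a b) x = r2" by (rule pointwise)
  next
    fix L t :: real
    assume L: "L > 0" and per: "\<forall>x t. k1 (x + L) t = k1 x t \<and> k2 (x + L) t = k2 x t"
    show "((\<lambda>s. integral {0..L} (\<lambda>x. k2 x s)) has_real_derivative 0) (at t)"
      by (rule cons1) (use per L in auto)
    show "((\<lambda>s. integral {0..L} (\<lambda>x. rho3 (jet (\<lambda>y. k1 y s) x) (jet (\<lambda>y. k2 y s) x)))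
              has_real_derivative 0) (at t)"
      by (rule cons2) (use per L in auto)
  qed
qed

end
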